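(* Let $\mathfrak g$ be a perfect Lie algebra (i.e. $[\mathfrak g,\mathfrak g]=\mathfrak g$), let $k\ge2$ be an integer and let $m\in\mathbb F$ with $m\ne0$ and $m\notin\{-1,-2,-3,\dots\}$. If a linear map $f:\mathfrak g\to\mathfrak g$ satisfies $$m\, f([x_1,\dots,x_k])+\sum_{i=2}^{k}[x_1,\dots,x_{i-1},f([x_i,\dots,x_k])]=0$$ for all $x_1,\dots,x_k\in\mathfrak g$, then $f=0$.
   Context: All Lie algebras are finite-dimensional over an algebraically closed field $\mathbb F$ of characteristic zero. For $x_1,\dots,x_{n}\in\mathfrak g$, $[x_1,\dots,x_{n}]$ denotes the right-nested bracket $[x_1,[x_2,[\dots,[x_{n-1},x_{n}]\dots]]]$, with $[x]=x$ for a single element; thus the term $i=k$ of the sum is $[x_1,\dots,x_{k-1},f(x_k)]$. *)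

theory Defs
  imports Main "HOL-Computational_Algebra.Polynomial"
begin

definition alg_closed_field :: "'k::field itself \<Rightarrow> bool" where
  "alg_closed_field _ \<longleftrightarrow> (\<forall>p :: 'k poly. 0 < degree p \<longrightarrow> (\<exists>x. poly p x = 0))"

definition lie_algebra :: "('k::field \<Rightarrow> 'v::ab_group_add \<Rightarrow> 'v) \<Rightarrow> ('v \<Rightarrow> 'v \<Rightarrow> 'v) \<Rightarrow> bool" where
  "lie_algebra sc br \<longleftrightarrow>
     vector_space sc \<and>
     (\<exists>B. finite B \<and> module.span sc B = UNIV) \<and>
     (\<forall>x. Vector_Spaces.linear sc sc (br x)) \<and>
     (\<forall>y. Vector_Spaces.linear sc sc (\<lambda>x. br x y)) \<and>
     (\<forall>x. br x x = 0) \<and>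
     (\<forall>x y z. br x (br y z) + br y (br z x) + br z (br x y) = 0)"

definition perfect_lie :: "('k::field \<Rightarrow> 'v::ab_group_add \<Rightarrow> 'v) \<Rightarrow> ('v \<Rightarrow> 'v \<Rightarrow> 'v) \<Rightarrow> bool" where
  "perfect_lie sc br \<longleftrightarrow> module.span sc {br x y | x y. True} = UNIV"

fun rnest :: "('v \<Rightarrow> 'v \<Rightarrow> 'v) \<Rightarrow> 'v list \<Rightarrow> 'v" where
  "rnest br [] = undefined"
| "rnest br [x] = x"
| "rnest br (x # y # ys) = br x (rnest br (y # ys))"

end

theory Submission
  imports Defs
begin


locale LieP = vector_space sc for sc :: "'k::field_char_0 \<Rightarrow> 'v::ab_group_add \<Rightarrow> 'v" +
  fixes br :: "'v \<Rightarrow> 'v \<Rightarrow> 'v"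
  assumes addR: "br x (a + b) = br x a + br x b"
    and sclR: "br x (sc r a) = sc r (br x a)"
    and addL: "br (a + b) y = br a y + br b y"
    and sclL: "br (sc r a) y = sc r (br a y)"
    and alt: "br x x = 0"
    and jac: "br x (br y z) + br y (br z x) + br z (br x y) = 0"
    and perf: "span {br x y | x y. True} = UNIV"
begin

lemma br0R[simp]: "br x 0 = 0" using addR[of x 0 0] by simp
lemma br0L[simp]: "br 0 y = 0" using addL[of 0 0 y] by simp
lemma negR: "br x (- a) = - br x a"
proof -
  have "br x a + br x (- a) = 0" using addR[of x a "-a"] by simp
  then show ?thesis by (rule minus_unique[symmetric])
qed
lemma negL: "br (- a) y = - br a y"
proof -
  have "br a y + br (- a) y = 0" using addL[of a "-a" y] by simp
  then show ?thesis by (rule minus_unique[symmetric])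
qed
lemma diffR: "br x (a - b) = br x a - br x b" using addR[of x a "-b"] by (simp add: negR)
lemma diffL: "br (a - b) y = br a y - br b y" using addL[of a "-b" y] by (simp add: negL)
lemma anti: "br y x = - br x y"
proof -
  have "br (x+y) (x+y) = br x y + br y x" by (subst addL, subst addR, subst addR) (simp add: alt)
  then have "br x y + br y x = 0" by (simp add: alt)
  then show ?thesis by (rule minus_unique[symmetric])
qed
lemma jac2: "br x (br y z) = br (br x y) z + br y (br x z)"
proof -
  have "br (br x y) z = - br z (br x y)" by (rule anti)
  also have "br z (br x y) = - br x (br y z) - br y (br z x)" using jac[of x y z]
    by (simp add: eq_neg_iff_add_eq_0 algebra_simps)
  also have "br z x = - br x z" by (rule anti)
  finally show ?thesis by (simp add: negR)
qed
lemma sumR: "br x (sum g A) = (\<Sum>i\<in>A. br x (g i))"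
  by (induct A rule: infinite_finite_induct) (simp_all add: addR)

definition inZ :: "'v \<Rightarrow> bool" where "inZ z \<longleftrightarrow> (\<forall>t. br t z = 0)"

lemma inZ0[simp]: "inZ 0" by (simp add: inZ_def)
lemma inZ_add: "inZ a \<Longrightarrow> inZ b \<Longrightarrow> inZ (a + b)" by (simp add: inZ_def addR)
lemma inZ_diff: "inZ a \<Longrightarrow> inZ b \<Longrightarrow> inZ (a - b)" by (simp add: inZ_def diffR)
lemma inZ_neg: "inZ a \<Longrightarrow> inZ (- a)" by (simp add: inZ_def negR)
lemma inZ_sc: "inZ a \<Longrightarrow> inZ (sc r a)" by (simp add: inZ_def sclR)
lemma inZ_brR: "inZ z \<Longrightarrow> br t z = 0" by (simp add: inZ_def)
lemma inZ_brL: "inZ z \<Longrightarrow> br z t = 0" by (metis anti inZ_def neg_equal_0_iff_equal)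
lemma inZ_subspace: "subspace (Collect inZ)"
  by (auto simp: subspace_def inZ_add inZ_sc)
lemma eqZR: "inZ (a - b) \<Longrightarrow> br t a = br t b"
  using inZ_brR[of "a-b" t] by (simp add: diffR)
lemma eqZL: "inZ (a - b) \<Longrightarrow> br a t = br b t"
  using inZ_brL[of "a-b" t] by (simp add: diffL)

lemma perf_ind: assumes "subspace S" "\<And>x y. br x y \<in> S" shows "v \<in> S"
proof -
  have "v \<in> span {br x y | x y. True}" using perf by simp
  then show ?thesis by (rule span_subspace_induct) (use assms in auto)
qed

lemma subspace_pre: assumes "subspace S" "\<And>a b. g (a + b) = g a + g b" "\<And>r a. g (sc r a) = sc r (g a)"
  shows "subspace {u. g u \<in> S}"
proof -
  have "g 0 = 0" using assms(2)[of 0 0] by simp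
  then show ?thesis using assms unfolding subspace_def by auto
qed

abbreviation F where "F P v \<equiv> foldr br P v"

lemma F0[simp]: "F P 0 = 0" by (induct P) auto
lemma Fadd: "F P (a + b) = F P a + F P b" by (induct P) (auto simp: addR)
lemma Fscl: "F P (sc r a) = sc r (F P a)" by (induct P) (auto simp: sclR)
lemma Fdiff: "F P (a - b) = F P a - F P b" by (induct P) (auto simp: diffR)
lemma Fneg: "F P (- a) = - F P a" by (induct P) (auto simp: negR)
lemma FZ: "inZ z \<Longrightarrow> inZ (F P z)" by (induct P) (auto simp: inZ_brR)
lemma FeqZ: "inZ (a - b) \<Longrightarrow> inZ (F P a - F P b)"
  by (simp add: Fdiff[symmetric] FZ)

lemma rnest_F: "rnest br (P @ [v]) = F P v"
  by (induct P rule: induct_list012) auto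

lemma Z_lemma: "(\<And>Q. length Q = n \<Longrightarrow> inZ (F Q a)) \<Longrightarrow> inZ a"
proof (induct n arbitrary: a)
  case 0 then show ?case using 0[of "[]"] by simp
next
  case (Suc n)
  have 1: "inZ (br y a)" for y
  proof (rule Suc.hyps)
    fix Q :: "'v list" assume "length Q = n"
    then show "inZ (F Q (br y a))" using Suc.prems[of "Q @ [y]"] by simp
  qed
  have "t \<in> {t. br t a = 0}" for t
  proof (rule perf_ind)
    show "subspace {t. br t a = 0}" by (auto simp: subspace_def addL sclL)
    fix x y show "br x y \<in> {t. br t a = 0}"
      using jac2[of x y a] 1[of y] 1[of x] by (simp add: inZ_brR)
  qed
  then show ?case by (simp add: inZ_def)
qed

lemma nest_span: assumes "subspace S" "\<And>P v. length P = n \<Longrightarrow> F P v \<in> S" shows "u \<in> S"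
  using assms
proof (induct n arbitrary: S u)
  case 0 then show ?case using 0(2)[of "[]"] by simp
next
  case (Suc n)
  have "br y w \<in> S" for y w
  proof -
    have "w \<in> {w. br y w \<in> S}"
    proof (rule Suc.hyps)
      show "subspace {w. br y w \<in> S}" by (rule subspace_pre[OF Suc.prems(1)]) (auto simp: addR sclR)
      fix P :: "'v list" and v assume "length P = n" 
      then have "F (y # P) v \<in> S" using Suc.prems(2) by (metis length_Cons)
      then show "F P v \<in> {w. br y w \<in> S}" by simp
    qed
    then show ?thesis by simp
  qed
  then show ?case by (rule perf_ind[OF Suc.prems(1)])
qed

end



context LieP begin
definition eqv (infix "\<approx>" 50) where "a \<approx> b \<longleftrightarrow> inZ (a - b)"
lemma eqv_refl[simp]: "a \<approx> a" by (simp add: eqv_def)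
lemma eqv_sym: "a \<approx> b \<Longrightarrow> b \<approx> a" unfolding eqv_def using inZ_neg by fastforce
lemma eqv_trans[trans]: "a \<approx> b \<Longrightarrow> b \<approx> c \<Longrightarrow> a \<approx> c"
  unfolding eqv_def using inZ_add by fastforce
lemma eq_eqv_trans[trans]: "a = b \<Longrightarrow> b \<approx> c \<Longrightarrow> a \<approx> c" by simp
lemma eqv_eq_trans[trans]: "a \<approx> b \<Longrightarrow> b = c \<Longrightarrow> a \<approx> c" by simp
lemma eqv_add: "a \<approx> b \<Longrightarrow> c \<approx> d \<Longrightarrow> a + c \<approx> b + d"
  unfolding eqv_def using inZ_add by (fastforce simp: algebra_simps)
lemma eqv_diff: "a \<approx> b \<Longrightarrow> c \<approx> d \<Longrightarrow> a - c \<approx> b - d"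
  unfolding eqv_def using inZ_diff by (fastforce simp: algebra_simps)
lemma eqv_neg: "a \<approx> b \<Longrightarrow> - a \<approx> - b"
  unfolding eqv_def using inZ_neg by (fastforce simp: algebra_simps)
lemma eqv_sc: "a \<approx> b \<Longrightarrow> sc r a \<approx> sc r b"
  unfolding eqv_def using inZ_sc by (fastforce simp: scale_right_diff_distrib)
lemma eqv_brR: "a \<approx> b \<Longrightarrow> br t a = br t b" unfolding eqv_def by (rule eqZR)
lemma eqv_brL: "a \<approx> b \<Longrightarrow> br a t = br b t" unfolding eqv_def by (rule eqZL)
lemma eqv_0: "a \<approx> 0 \<longleftrightarrow> inZ a" by (simp add: eqv_def)
end

locale LieF = LieP sc br for sc :: "'k::field_char_0 \<Rightarrow> 'v::ab_group_add \<Rightarrow> 'v" and br +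
  fixes f :: "'v \<Rightarrow> 'v"
  assumes fadd: "f (a + b) = f a + f b" and fscl: "f (sc r a) = sc r (f a)"
begin

lemma f0[simp]: "f 0 = 0" using fadd[of 0 0] by simp
lemma fneg: "f (- a) = - f a"
proof -
  have "f a + f (- a) = 0" using fadd[of a "-a"] by simp
  then show ?thesis by (rule minus_unique[symmetric])
qed
lemma fdiff: "f (a - b) = f a - f b" using fadd[of a "-b"] by (simp add: fneg)

fun Tr where "Tr [] v = 0" | "Tr (p # P) v = br p (f (F P v) + Tr P v)"
fun Sf where "Sf [] v = 0" | "Sf (p # P) v = br (f p) (F P v) + br p (Sf P v)"

lemma Sf0[simp]: "Sf P 0 = 0" by (induct P) auto
lemma Sfdiff: "Sf P (a - b) = Sf P a - Sf P b" by (induct P) (auto simp: Fdiff diffR)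
lemma Sf_app: "Sf (R @ Q) v = Sf R (F Q v) + F R (Sf Q v)"
  by (induct R) (auto simp: addR)

lemma Tr_sum: "(\<Sum>j\<in>{1..length P}. F (take j P) (f (F (drop j P) v))) = Tr P v"
proof (induct P)
  case Nil then show ?case by simp
next
  case (Cons p P)
  have "(\<Sum>j\<in>{1..length (p # P)}. F (take j (p # P)) (f (F (drop j (p # P)) v)))
      = br p (f (F P v)) + (\<Sum>j\<in>{Suc 1..Suc (length P)}. F (take j (p # P)) (f (F (drop j (p # P)) v)))"
  proof -
    have e: "sum g {1..Suc n} = g 1 + sum g {Suc 1..Suc n}" for g :: "nat \<Rightarrow> 'v" and n
      by (rule sum.atLeast_Suc_atMost) simp
    show ?thesis by (simp only: length_Cons e) simp
  qed
  also have "(\<Sum>j\<in>{Suc 1..Suc (length P)}. F (take j (p # P)) (f (F (drop j (p # P)) v)))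
      = (\<Sum>j\<in>{1..length P}. br p (F (take j P) (f (F (drop j P) v))))"
    by (simp only: sum.shift_bounds_cl_Suc_ivl) simp
  also have "\<dots> = br p (Tr P v)" by (simp only: sumR[symmetric] Cons)
  finally show ?case by (simp add: addR)
qed

lemma map_nth_upt: "map (\<lambda>i. L ! (i - 1)) [1..<length L + 1] = L"
proof -
  have "[1..<length L + 1] = map Suc [0..<length L]" by (simp del: upt_Suc add: map_Suc_upt)
  then show ?thesis by (simp del: upt_Suc add: map_nth comp_def)
qed

lemma hypL:
  assumes H: "\<forall>x :: nat \<Rightarrow> 'v.
           sc m (f (rnest br (map x [1..<k+1])))
           + (\<Sum>i\<in>{2..k}. rnest br (map x [1..<i] @ [f (rnest br (map x [i..<k+1]))])) = 0"
    and k: "k \<ge> 2" and len: "length P = k - 1"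
  shows "sc m (f (F P v)) + Tr P v = 0"
proof -
  define L where "L = P @ [v]"
  define x where "x = (\<lambda>i. L ! (i - 1))"
  have lL: "length L = k" using len k by (simp add: L_def)
  have mx: "map x [1..<k+1] = L" using map_nth_upt[of L] lL by (simp add: x_def)
  have t: "map x [1..<i] = take (i - 1) P" if "2 \<le> i" "i \<le> k" for i
  proof -
    have "map x [1..<i] = map x (take (i - 1) [1..<k+1])" using that by (simp del: upt_Suc)
    also have "\<dots> = take (i - 1) L" by (simp only: take_map[symmetric] mx)
    finally have "map x [1..<i] = take (i - 1) L" .
    then show ?thesis using that len by (simp add: L_def)
  qed
  have d: "map x [i..<k+1] = drop (i - 1) P @ [v]" if "2 \<le> i" "i \<le> k" for i
  proof -
    have "map x [i..<k+1] = map x (drop (i - 1) [1..<k+1])" using that by (simp del: upt_Suc)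
    also have "\<dots> = drop (i - 1) L" by (simp only: drop_map[symmetric] mx)
    finally have "map x [i..<k+1] = drop (i - 1) L" .
    then show ?thesis using that len by (simp add: L_def)
  qed
  have "(\<Sum>i\<in>{2..k}. rnest br (map x [1..<i] @ [f (rnest br (map x [i..<k+1]))]))
      = (\<Sum>i\<in>{2..k}. F (take (i - 1) P) (f (F (drop (i - 1) P) v)))"
  proof (rule sum.cong[OF refl])
    fix i assume "i \<in> {2..k}"
    then have i: "2 \<le> i" "i \<le> k" by auto
    show "rnest br (map x [1..<i] @ [f (rnest br (map x [i..<k+1]))])
        = F (take (i - 1) P) (f (F (drop (i - 1) P) v))"
      by (simp only: t[OF i] d[OF i] rnest_F)
  qed
  also have "\<dots> = (\<Sum>i\<in>{Suc 1..Suc (k - 1)}. F (take (i - 1) P) (f (F (drop (i - 1) P) v)))"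
    using k by (simp add: Suc_diff_Suc numeral_2_eq_2)
  also have "\<dots> = (\<Sum>j\<in>{1..length P}. F (take j P) (f (F (drop j P) v)))"
    by (simp only: sum.shift_bounds_cl_Suc_ivl len) simp
  also have "\<dots> = Tr P v" by (rule Tr_sum)
  finally have s: "(\<Sum>i\<in>{2..k}. rnest br (map x [1..<i] @ [f (rnest br (map x [i..<k+1]))])) = Tr P v" .
  have "rnest br (map x [1..<k+1]) = F P v" by (simp only: mx L_def rnest_F)
  with H[rule_format, of x] s show ?thesis by simp
qed

end



context LieF begin

lemma Tr_last: "Tr (Q @ [y]) y = F Q (br y (f y))"
  by (induct Q) (auto simp: alt)

lemma gammaZ:
  assumes hyp: "\<And>P v. length P = Suc n \<Longrightarrow> sc m (f (F P v)) + Tr P v = 0"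
  shows "inZ (br y (f y))"
proof (rule Z_lemma)
  fix Q :: "'v list" assume "length Q = n"
  then have "sc m (f (F (Q @ [y]) y)) + Tr (Q @ [y]) y = 0" by (intro hyp) simp
  then have "F Q (br y (f y)) = 0" by (simp add: Tr_last alt)
  then show "inZ (F Q (br y (f y)))" by simp
qed

lemma gamma_of:
  assumes "\<And>y. inZ (br y (f y))"
  shows "br x (f y) \<approx> br (f x) y"
proof -
  have e: "br (x + y) (f (x + y)) = br x (f x) + br x (f y) + br y (f x) + br y (f y)"
    by (simp add: fadd addL addR algebra_simps)
  have "inZ (br (x + y) (f (x + y)) - br x (f x) - br y (f y))"
    using assms by (intro inZ_diff) auto
  then have "inZ (br x (f y) + br y (f x))" by (simp only: e) (simp add: algebra_simps)
  moreover have "br y (f x) = - br (f x) y" by (rule anti)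
  ultimately show ?thesis by (simp add: eqv_def)
qed

end

locale LieG = LieF sc br f for sc :: "'k::field_char_0 \<Rightarrow> 'v::ab_group_add \<Rightarrow> 'v" and br f +
  assumes gam: "br x (f y) \<approx> br (f x) y"
begin

lemma gam': "br (f x) y \<approx> br x (f y)" by (rule eqv_sym[OF gam])
lemma gam2: "br (f x) y \<approx> br x (f y)" by (rule gam')

lemma TrSf: "Tr P v \<approx> Sf P v"
proof (induct P)
  case Nil then show ?case by simp
next
  case (Cons p P)
  have "Tr (p # P) v = br p (f (F P v)) + br p (Tr P v)" by (simp add: addR)
  also have "\<dots> = br p (f (F P v)) + br p (Sf P v)" using eqv_brR[OF Cons] by simp
  also have "\<dots> \<approx> br (f p) (F P v) + br p (Sf P v)" by (intro eqv_add gam eqv_refl)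
  also have "\<dots> = Sf (p # P) v" by simp
  finally show ?case .
qed

definition D where "D x y = f (br x y) - br x (f y)"
definition tau where "tau z x y = br z (D x y)"

lemma D_anti: "D y x \<approx> - D x y"
proof -
  have "D y x = - f (br x y) - br y (f x)" by (simp add: D_def anti[of x y] fneg)
  also have "\<dots> \<approx> - f (br x y) - br (f y) x" by (intro eqv_diff eqv_refl gam)
  also have "\<dots> = - D x y" by (simp add: D_def anti[of "f y" x])
  finally show ?thesis .
qed

lemma tau_anti: "tau z y x = - tau z x y"
  unfolding tau_def using eqv_brR[OF D_anti, of z y x] by (simp add: negR)

lemma tau_cyc: "tau z x y \<approx> tau y z x"
proof -
  have A: "br z (f (br x y)) \<approx> br (br z (f x)) y + br x (br z (f y))"
  proof -
    have "br z (f (br x y)) \<approx> br (f z) (br x y)" by (rule gam)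
    also have "\<dots> = br (br (f z) x) y + br x (br (f z) y)" by (rule jac2)
    also have "br (br (f z) x) y = br (br z (f x)) y"
    proof (rule eqv_brL)
      have "br (f z) x = - br x (f z)" by (rule anti)
      also have "\<dots> \<approx> - br (f x) z" by (intro eqv_neg gam)
      also have "\<dots> = br z (f x)" by (simp add: anti[of "f x" z])
      finally show "br (f z) x \<approx> br z (f x)" .
    qed
    also have "br x (br (f z) y) = br x (br z (f y))" by (rule eqv_brR[OF gam'])
    finally show ?thesis .
  qed
  have B: "br z (br x (f y)) \<approx> br (f (br z x)) y + br x (br z (f y))"
  proof -
    have "br z (br x (f y)) = br (br z x) (f y) + br x (br z (f y))" by (rule jac2)
    also have "\<dots> \<approx> br (f (br z x)) y + br x (br z (f y))" by (intro eqv_add gam eqv_refl)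
    finally show ?thesis .
  qed
  have "tau z x y = br z (f (br x y)) - br z (br x (f y))" by (simp add: tau_def D_def diffR)
  also have "\<dots> \<approx> (br (br z (f x)) y + br x (br z (f y))) - (br (f (br z x)) y + br x (br z (f y)))"
    by (intro eqv_diff A B)
  also have "\<dots> = br (br z (f x) - f (br z x)) y" by (simp add: diffL)
  also have "\<dots> = tau y z x" by (simp only: tau_def D_def anti[of "br z (f x) - f (br z x)" y] negR[symmetric] minus_diff_eq)
  finally show ?thesis .
qed

end



context LieF begin
lemma Sfadd: "Sf P (a + b) = Sf P a + Sf P b" by (induct P) (auto simp: Fadd addR)
lemma three: "sc (1/3) (x + x + x) = x"
proof -
  have "x + x + x = sc (1 + 1 + 1) x" by (simp only: scale_left_distrib scale_one)
  then have "sc (1/3) (x + x + x) = sc ((1/3) * (1 + 1 + 1)) x" by simp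
  then show ?thesis by simp
qed
end

context LieG begin

definition X where "X p q a b = Sf [p,q] (br a b) - Sf [q,p] (br a b) - Sf [br p q, a] b"

lemma K_step:
  assumes H': "\<And>P v. length P = Suc (Suc r) \<Longrightarrow> inZ (sc m (f (F P v)) + Sf P v)"
  shows "inZ (X p q a b)"
proof (rule Z_lemma[of r])
  fix R :: "'v list" assume lR: "length R = r"
  define w where "w = br a b"
  have h1: "inZ (sc m (f (F (R @ [p,q]) w)) + Sf (R @ [p,q]) w)" by (rule H') (simp add: lR)
  have h2: "inZ (sc m (f (F (R @ [q,p]) w)) + Sf (R @ [q,p]) w)" by (rule H') (simp add: lR)
  have h3: "inZ (sc m (f (F (R @ [br p q, a]) b)) + Sf (R @ [br p q, a]) b)" by (rule H') (simp add: lR)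
  have J: "br p (br q (br a b)) = br (br p q) (br a b) + br q (br p (br a b))" by (rule jac2)
  have e: "(sc m (f (F (R @ [p,q]) w)) + Sf (R @ [p,q]) w)
      - (sc m (f (F (R @ [q,p]) w)) + Sf (R @ [q,p]) w)
      - (sc m (f (F (R @ [br p q, a]) b)) + Sf (R @ [br p q, a]) b) = F R (X p q a b)"
    by (simp add: Sf_app J Fadd fadd Sfadd scale_right_distrib Fdiff X_def w_def)
  have "inZ ((sc m (f (F (R @ [p,q]) w)) + Sf (R @ [p,q]) w)
      - (sc m (f (F (R @ [q,p]) w)) + Sf (R @ [q,p]) w)
      - (sc m (f (F (R @ [br p q, a]) b)) + Sf (R @ [br p q, a]) b))"
    using h1 h2 h3 by (intro inZ_diff)
  then show "inZ (F R (X p q a b))" by (simp only: e)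
qed

lemma X_eqv: "X p q a b \<approx> tau (br p q) a b - (tau q p (br a b) + tau q p (br a b))"
proof -
  define w where "w = br a b"
  have S1: "Sf [p,q] w - Sf [q,p] w = br (br (f p) q) w + br (br p (f q)) w"
    by (simp add: jac2[of "f p" q w] jac2[of p "f q" w])
  have S2: "br (br (f p) q) w = br (br p (f q)) w" by (rule eqv_brL[OF gam'])
  have S3: "br (br p (f q)) w \<approx> br (br p q) (f w) - tau q p w"
  proof -
    have "br (br p (f q)) w = br p (br (f q) w) - br (f q) (br p w)"
      by (simp add: jac2[of p "f q" w])
    also have "br p (br (f q) w) = br p (br q (f w))" by (rule eqv_brR[OF gam'])
    also have "br p (br q (f w)) - br (f q) (br p w) \<approx> br p (br q (f w)) - br q (f (br p w))"
      by (intro eqv_diff eqv_refl gam')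
    also have "br q (f (br p w)) = tau q p w + br q (br p (f w))"
      by (simp add: tau_def D_def diffR)
    also have "br p (br q (f w)) - (tau q p w + br q (br p (f w))) = br (br p q) (f w) - tau q p w"
      by (simp add: jac2[of p q "f w"])
    finally show ?thesis .
  qed
  have S4: "Sf [br p q, a] b \<approx> br (br p q) (f w) + (br (br p q) (f w) - tau (br p q) a b)"
  proof -
    have "Sf [br p q, a] b = br (f (br p q)) w + br (br p q) (br (f a) b)" by (simp add: w_def)
    also have "\<dots> \<approx> br (br p q) (f w) + br (br p q) (br (f a) b)" by (intro eqv_add gam' eqv_refl)
    also have "br (br p q) (br (f a) b) = br (br p q) (br a (f b))" by (rule eqv_brR[OF gam'])
    also have "\<dots> = br (br p q) (f w) - tau (br p q) a b" by (simp add: tau_def D_def diffR w_def)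
    finally show ?thesis .
  qed
  have "X p q a b = (br (br p (f q)) w + br (br p (f q)) w) - Sf [br p q, a] b"
    using S1 S2 by (simp add: X_def w_def)
  also have "\<dots> \<approx> ((br (br p q) (f w) - tau q p w) + (br (br p q) (f w) - tau q p w))
       - (br (br p q) (f w) + (br (br p q) (f w) - tau (br p q) a b))"
    by (intro eqv_diff eqv_add S3 S4)
  also have "\<dots> = tau (br p q) a b - (tau q p (br a b) + tau q p (br a b))"
    by (simp add: w_def algebra_simps)
  finally show ?thesis .
qed

lemma D_Z_of_X:
  assumes XZ: "\<And>p q a b. inZ (X p q a b)"
  shows "inZ (D a b)"
proof -
  have rel: "tau (br p q) a b \<approx> - tau (br a b) p q - tau (br a b) p q" for p q a b
  proof -
    have "tau (br p q) a b - (tau q p (br a b) + tau q p (br a b)) \<approx> 0"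
      using eqv_trans[OF eqv_sym[OF X_eqv] XZ[unfolded eqv_0[symmetric]]] .
    then have "tau (br p q) a b \<approx> tau q p (br a b) + tau q p (br a b)"
      by (simp add: eqv_def)
    also have "tau q p (br a b) + tau q p (br a b) \<approx> tau (br a b) q p + tau (br a b) q p"
      by (intro eqv_add tau_cyc)
    also have "tau (br a b) q p = - tau (br a b) p q" by (rule tau_anti)
    finally show ?thesis by simp
  qed
  have al: "inZ (tau (br p q) a b)" for p q a b
  proof -
    let ?x = "tau (br p q) a b" and ?y = "tau (br a b) p q"
    have 1: "?x \<approx> - ?y - ?y" by (rule rel)
    have 2: "?y \<approx> - ?x - ?x" by (rule rel)
    have "?x \<approx> - (- ?x - ?x) - (- ?x - ?x)" using 1 eqv_diff[OF eqv_neg[OF 2] 2]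
      by (rule eqv_trans)
    then have h: "inZ (?x - (- (- ?x - ?x) - (- ?x - ?x)))" by (simp only: eqv_def)
    have eq: "- (?x - (- (- ?x - ?x) - (- ?x - ?x))) = ?x + ?x + ?x" by (simp add: algebra_simps)
    from inZ_neg[OF h] have "inZ (?x + ?x + ?x)" by (simp only: eq)
    then have "inZ (sc (1/3) (?x + ?x + ?x))" by (rule inZ_sc)
    then show ?thesis by (simp only: three)
  qed
  have "z \<in> {z. tau z a b \<in> Collect inZ}" for z
  proof (rule perf_ind)
    show "subspace {z. tau z a b \<in> Collect inZ}"
      by (rule subspace_pre[OF inZ_subspace]) (auto simp: tau_def addL sclL)
    fix x y show "br x y \<in> {z. tau z a b \<in> Collect inZ}" using al by simp
  qed
  then have t: "inZ (tau z a b)" for z by simp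
  show ?thesis
  proof (rule Z_lemma[of 1])
    fix Q :: "'v list" assume "length Q = 1"
    then obtain z where "Q = [z]" by (cases Q) auto
    then show "inZ (F Q (D a b))" using t[of z] by (simp add: tau_def)
  qed
qed

end



context LieG begin

lemma Fc: assumes Dz: "\<And>a b. inZ (D a b)" shows "F Q (f u) \<approx> f (F Q u)"
proof (induct Q)
  case Nil then show ?case by simp
next
  case (Cons q Q)
  have "F (q # Q) (f u) = br q (f (F Q u))" using eqv_brR[OF Cons] by simp
  also have "\<dots> \<approx> f (br q (F Q u))"
  proof (rule eqv_sym)
    show "f (br q (F Q u)) \<approx> br q (f (F Q u))" using Dz[of q "F Q u"] by (simp add: eqv_def D_def)
  qed
  finally show ?case by simp
qed

lemma Sfc: assumes Dz: "\<And>a b. inZ (D a b)" shows "Sf P v \<approx> sc (of_nat (length P)) (f (F P v))"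
proof (induct P)
  case Nil then show ?case by simp
next
  case (Cons p P)
  have c: "br p (f u) \<approx> f (br p u)" for u
  proof (rule eqv_sym)
    show "f (br p u) \<approx> br p (f u)" using Dz[of p u] by (simp add: eqv_def D_def)
  qed
  have "Sf (p # P) v = br (f p) (F P v) + br p (Sf P v)" by simp
  also have "\<dots> = br (f p) (F P v) + sc (of_nat (length P)) (br p (f (F P v)))"
    using eqv_brR[OF Cons] by (simp add: sclR)
  also have "\<dots> \<approx> f (br p (F P v)) + sc (of_nat (length P)) (f (br p (F P v)))"
    by (intro eqv_add eqv_sc c eqv_trans[OF gam' c])
  also have "\<dots> = sc (of_nat (length (p # P))) (f (F (p # P) v))"
    by (simp add: scale_left_distrib)
  finally show ?case .
qed

end

context LieF begin

lemma TrZ: assumes "\<And>u. inZ (f u)" shows "Tr P v = 0"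
  by (induct P) (auto simp: addR inZ_brR assms)

lemma f_zero_of_nests:
  assumes "\<And>P v. length P = n \<Longrightarrow> f (F P v) = 0" shows "f u = 0"
proof -
  have "u \<in> {u. f u \<in> {0}}"
  proof (rule nest_span[of _ n])
    show "subspace {u. f u \<in> {0}}" by (rule subspace_pre) (auto simp: fadd fscl)
  qed (use assms in auto)
  then show ?thesis by simp
qed

lemma main3:
  assumes hyp: "\<And>P v. length P = Suc (Suc r) \<Longrightarrow> sc m (f (F P v)) + Tr P v = 0"
    and m0: "m \<noteq> 0" and mk: "m + of_nat (Suc (Suc r)) \<noteq> 0"
  shows "f u = 0"
proof -
  have gZ: "inZ (br y (f y))" for y by (rule gammaZ[of "Suc r"]) (rule hyp)
  have gam: "br x (f y) \<approx> br (f x) y" for x y by (rule gamma_of) (rule gZ)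
  interpret G: LieG sc br f by (rule LieG.intro[OF LieF_axioms], unfold_locales, rule gam)
  have H': "inZ (sc m (f (F P v)) + Sf P v)" if "length P = Suc (Suc r)" for P v
  proof -
    have "sc m (f (F P v)) + Sf P v \<approx> sc m (f (F P v)) + Tr P v"
      by (intro eqv_add eqv_refl eqv_sym[OF G.TrSf])
    also have "\<dots> = 0" using hyp[OF that] .
    finally show ?thesis by (simp add: eqv_def)
  qed
  have XZ: "inZ (G.X p q a b)" for p q a b by (rule G.K_step[of r]) (rule H')
  have Dz: "inZ (G.D a b)" for a b by (rule G.D_Z_of_X) (rule XZ)
  have fZ: "inZ (f (F P v))" if "length P = Suc (Suc r)" for P v
  proof -
    have "sc m (f (F P v)) + Sf P v \<approx> sc m (f (F P v)) + sc (of_nat (length P)) (f (F P v))"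
      by (intro eqv_add eqv_refl G.Sfc Dz)
    also have "\<dots> = sc (m + of_nat (Suc (Suc r))) (f (F P v))"
      using that by (simp add: scale_left_distrib)
    finally have e1: "sc m (f (F P v)) + Sf P v \<approx> sc (m + of_nat (Suc (Suc r))) (f (F P v))" .
    have "inZ ((sc (m + of_nat (Suc (Suc r))) (f (F P v)) - (sc m (f (F P v)) + Sf P v)) + (sc m (f (F P v)) + Sf P v))"
      using eqv_sym[OF e1] H'[OF that] unfolding eqv_def by (rule inZ_add)
    then have "inZ (sc (m + of_nat (Suc (Suc r))) (f (F P v)))" by simp
    then have "inZ (sc (inverse (m + of_nat (Suc (Suc r)))) (sc (m + of_nat (Suc (Suc r))) (f (F P v))))"
      by (rule inZ_sc)
    then show ?thesis using mk by simp
  qed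
  have allZ: "inZ (f u)" for u
  proof -
    have "u \<in> {u. f u \<in> Collect inZ}"
    proof (rule nest_span[of _ "Suc (Suc r)"])
      show "subspace {u. f u \<in> Collect inZ}" by (rule subspace_pre[OF inZ_subspace]) (auto simp: fadd fscl)
    qed (use fZ in auto)
    then show ?thesis by simp
  qed
  show ?thesis
  proof (rule f_zero_of_nests[of "Suc (Suc r)"])
    fix P :: "'v list" and v assume "length P = Suc (Suc r)"
    then have "sc m (f (F P v)) = 0" using hyp TrZ[OF allZ] by fastforce
    then show "f (F P v) = 0" using m0 by simp
  qed
qed

lemma main2:
  assumes hyp: "\<And>P v. length P = Suc 0 \<Longrightarrow> sc m (f (F P v)) + Tr P v = 0"
    and m0: "m \<noteq> 0" and m1: "m \<noteq> - 1"
  shows "f u = 0"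
proof -
  have h: "sc m (f (br x y)) = - br x (f y)" for x y
    using hyp[of "[x]" y] by (simp add: eq_neg_iff_add_eq_0)
  have g0: "br y (f y) = 0" for y using h[of y y] by (simp add: alt fscl)
  have ge: "br y (f x) = - br x (f y)" for x y
  proof -
    have "br (x + y) (f (x + y)) = br x (f x) + br x (f y) + br y (f x) + br y (f y)"
      by (simp add: fadd addL addR algebra_simps)
    then have "br x (f y) + br y (f x) = 0" by (simp add: g0)
    then show ?thesis by (rule minus_unique[symmetric])
  qed
  define G where "G a b d = br a (br b (f d))" for a b d
  have G1: "sc m (sc m (f (br a (br b d)))) = G a b d" for a b d
  proof -
    have "sc m (sc m (f (br a (br b d)))) = sc m (- br a (f (br b d)))" by (simp only: h)
    also have "\<dots> = - br a (sc m (f (br b d)))" by (simp add: sclR)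
    also have "\<dots> = - br a (- br b (f d))" by (simp only: h)
    finally show ?thesis by (simp add: negR G_def)
  qed
  have G2: "sc m (f (br a (br b d))) = - br (f a) (br b d)" for a b d
    using h[of a "br b d"] ge[of a "br b d"] anti[of "f a" "br b d"] by simp
  have G3: "br (f a) (br b d) = G b a d - G d a b" for a b d
  proof -
    have "br (f a) (br b d) = br (br (f a) b) d + br b (br (f a) d)" by (rule jac2)
    also have "br (br (f a) b) d = br d (br b (f a))"
      by (simp add: anti[of "f a" b] negL anti[of "br b (f a)" d])
    also have "br b (f a) = - br a (f b)" by (rule ge)
    also have "br b (br (f a) d) = br b (br a (f d))"
      by (simp add: anti[of "f a" d] ge[of d a] negR)
    finally show ?thesis by (simp add: G_def negR)
  qed
  have rel: "G a b d = sc m (G d a b + G b d a)" for a b d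
  proof -
    have "G a b d = sc m (sc m (f (br a (br b d))))" by (rule G1[symmetric])
    also have "\<dots> = sc m (- (G b a d - G d a b))" by (simp only: G2 G3)
    also have "G b a d = - G b d a" by (simp add: G_def ge[of d a] negR)
    finally show ?thesis by (simp add: algebra_simps)
  qed
  have zero: "G a b d = 0" for a b d
  proof -
    let ?A = "G a b d" and ?B = "G b d a" and ?C = "G d a b"
    have rA: "?A = sc m (?C + ?B)" by (rule rel)
    have rB: "?B = sc m (?A + ?C)" by (rule rel)
    have rC: "?C = sc m (?B + ?A)" by (rule rel)
    have m1': "1 + m \<noteq> 0" using m1 by (metis add.commute add_eq_0_iff)
    have "sc (1 + m) (?A - ?B) = (?A - ?B) + sc m (?A - ?B)" by (simp add: scale_left_distrib)
    also have "sc m (?A - ?B) = ?B - ?A"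
    proof -
      have "?B - ?A = sc m (?A + ?C) - sc m (?C + ?B)" by (simp only: rA[symmetric] rB[symmetric])
      also have "\<dots> = sc m ((?A + ?C) - (?C + ?B))" by (simp only: scale_right_diff_distrib)
      finally show ?thesis by simp
    qed
    finally have "sc (1 + m) (?A - ?B) = 0" by simp
    then have AB: "?A = ?B" using m1' by simp
    have "sc (1 + m) (?B - ?C) = (?B - ?C) + sc m (?B - ?C)" by (simp add: scale_left_distrib)
    also have "sc m (?B - ?C) = ?C - ?B"
    proof -
      have "?C - ?B = sc m (?B + ?A) - sc m (?A + ?C)" by (simp only: rB[symmetric] rC[symmetric])
      also have "\<dots> = sc m ((?B + ?A) - (?A + ?C))" by (simp only: scale_right_diff_distrib)
      finally show ?thesis by simp
    qed
    finally have "sc (1 + m) (?B - ?C) = 0" by simp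
    then have BC: "?B = ?C" using m1' by simp
    have "?A + ?B + ?C = sc m (sc m (f (br a (br b d) + br b (br d a) + br d (br a b))))"
      by (simp add: G1[symmetric] fadd scale_right_distrib)
    also have "\<dots> = 0" by (simp add: jac)
    finally have "?A + ?A + ?A = 0" using AB BC by simp
    then have "sc (1/3) (?A + ?A + ?A) = 0" by simp
    then show ?thesis by (simp only: three)
  qed
  show ?thesis
  proof (rule f_zero_of_nests[of 2])
    fix P :: "'v list" and v assume "length P = 2"
    then obtain a b where P: "P = [a, b]"
      by (metis (no_types, lifting) One_nat_def Suc_1 length_0_conv length_Suc_conv)
    have "sc m (sc m (f (br a (br b v)))) = 0" using G1 zero by simp
    then show "f (F P v) = 0" using m0 P by simp
  qed
qed

end


theorem lemma2:
  fixes sc :: "'k::field_char_0 \<Rightarrow> 'v::ab_group_add \<Rightarrow> 'v"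
    and br :: "'v \<Rightarrow> 'v \<Rightarrow> 'v"
    and f :: "'v \<Rightarrow> 'v"
    and k :: nat
    and m :: 'k
  assumes "alg_closed_field TYPE('k)"
    and "lie_algebra sc br"
    and "perfect_lie sc br"
    and "k \<ge> 2"
    and "m \<noteq> 0"
    and "\<forall>n::nat. m \<noteq> - of_nat (Suc n)"
    and "Vector_Spaces.linear sc sc f"
    and "\<forall>x :: nat \<Rightarrow> 'v.
           sc m (f (rnest br (map x [1..<k+1])))
           + (\<Sum>i\<in>{2..k}. rnest br (map x [1..<i] @ [f (rnest br (map x [i..<k+1]))])) = 0"
  shows "f = (\<lambda>_. 0)"
proof -
  from assms(2) have vs: "vector_space sc"
    and lin1: "\<And>x. Vector_Spaces.linear sc sc (br x)"
    and lin2: "\<And>y. Vector_Spaces.linear sc sc (\<lambda>x. br x y)"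
    and al: "\<And>x. br x x = 0"
    and ja: "\<And>x y z. br x (br y z) + br y (br z x) + br z (br x y) = 0"
    unfolding lie_algebra_def by auto
  from assms(3) have pf: "module.span sc {br x y | x y. True} = UNIV"
    unfolding perfect_lie_def .
  from assms(7) have fl: "\<And>a b. f (a + b) = f a + f b" "\<And>r a. f (sc r a) = sc r (f a)"
    unfolding Vector_Spaces.linear_iff by auto
  interpret L: LieF sc br f
    apply unfold_locales
    using vs lin1 lin2 al ja pf fl by (auto simp: Vector_Spaces.linear_iff vector_space_def)
  have hyp: "sc m (f (foldr br P v)) + L.Tr P v = 0" if "length P = k - 1" for P v
    by (rule L.hypL[OF assms(8) assms(4) that])
  show ?thesis
  proof (cases "k = 2")
    case True
    have m1: "m \<noteq> - 1" using assms(6)[rule_format, of 0] by simp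
    show ?thesis
    proof
      fix u show "f u = 0"
        by (rule L.main2[OF _ assms(5) m1]) (rule hyp, simp add: True)
    qed
  next
    case False
    with assms(4) have k3: "k \<ge> 3" by simp
    define r where "r = k - 3"
    have kr: "k - 1 = Suc (Suc r)" using k3 by (simp add: r_def)
    have "m \<noteq> - of_nat (Suc (k - 2))" using assms(6) by blast
    moreover have "Suc (k - 2) = Suc (Suc r)" using k3 by (simp add: r_def)
    ultimately have mk: "m + of_nat (Suc (Suc r)) \<noteq> 0" by (metis add_eq_0_iff add.commute)
    show ?thesis
    proof
      fix u show "f u = 0"
        by (rule L.main3[OF _ assms(5) mk]) (rule hyp, use kr in simp)
    qed
  qed
qed

end
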